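(* Let $\mathcal{U}$ be a separable Banach space with dual $\mathcal{U}^*$ and pairing $[\cdot,\cdot]$, with quadratic norm $\|u\|^2=[\mathcal{K}^{-1}u,u]$ for an invertible symmetric positive linear $\mathcal{K}:\mathcal{U}^*\to\mathcal{U}$. Let $\Omega\subseteq\mathbb{R}^d$ be bounded and consider the PDE $\mathcal{P}(u)=f$ in $\Omega$, $\mathcal{B}(u)=g$ on $\partial\Omega$, where there exist bounded linear $L_1,\dots,L_Q\in\mathcal{L}(\mathcal{U};C(\Omega))$ with $L_1,\dots,L_{Q_b}\in\mathcal{L}(\mathcal{U};C(\partial\Omega))$ ($1\le Q_b\le Q$) and maps $P:\mathbb{R}^Q\to\mathbb{R}$, $B:\mathbb{R}^{Q_b}\to\mathbb{R}$ with $\mathcal{P}(u)(\mathbf{x})=P(L_1(u)(\mathbf{x}),\dots,L_Q(u)(\mathbf{x}))$ on $\Omega$ and $\mathcal{B}(u)(\mathbf{x})=B(L_1(u)(\mathbf{x}),\dots,L_{Q_b}(u)(\mathbf{x}))$ on $\partial\Omega$. With $\boldsymbol{\phi}$, $N$, $\mathbf{y}$, $F$, $\Theta$, $\chi_n$ as in the context, assume $\Theta$ is invertible, and assume there is a map $\overline{F}:\mathbb{R}^{N-M}\times\mathbb{R}^M\to\mathbb{R}^N$ such that $F(\mathbf{z})=\mathbf{y}$ if and only if $\mathbf{z}=\overline{F}(\mathbf{w},\mathbf{y})$ for a unique $\mathbf{w}\in\mathbb{R}^{N-M}$. Then $u^\dagger$ is a minimizer of $$\min_{u\in\mathcal{U}}\|u\|\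 \text{ s.t. }\ \mathcal{P}(u)(\mathbf{x}_m)=f(\mathbf{x}_m),\ 1\le m\le M_\Omega;\quad\mathcal{B}(u)(\mathbf{x}_m)=g(\mathbf{x}_m),\ M_\Omega<m\le M,$$ if and only if $u^\dagger=\sum_{n=1}^N z^\dagger_n\chi_n$ with $\mathbf{z}^\dagger=\overline{F}(\mathbf{w}^\dagger,\mathbf{y})$, where $\mathbf{w}^\dagger\in\mathbb{R}^{N-M}$ is a minimizer of $\min_{\mathbf{w}\in\mathbb{R}^{N-M}}\overline{F}(\mathbf{w},\mathbf{y})^T\Theta^{-1}\overline{F}(\mathbf{w},\mathbf{y})$.
   Context: Collocation points $\mathbf{x}_1,\dots,\mathbf{x}_{M_\Omega}\in\Omega$, $\mathbf{x}_{M_\Omega+1},\dots,\mathbf{x}_M\in\partial\Omega$. $\phi^{(q)}_m=\delta_{\mathbf{x}_m}\circ L_q$ for $1\le m\le M$ if $q\le Q_b$ and for $1\le m\le M_\Omega$ if $q>Q_b$; $\boldsymbol{\phi}=(\boldsymbol{\phi}^{(1)},\dots,\boldsymbol{\phi}^{(Q)})\in(\mathcal{U}^* )^N$, $N=MQ_b+M_\Omega(Q-Q_b)$. $y_m=f(\mathbf{x}_m)$ for $m\le M_\Omega$, $y_m=g(\mathbf{x}_m)$ otherwise. $F:\mathbb{R}^N\to\mathbb{R}^M$, $(F([\boldsymbol{\phi},u]))_m=P([\phi^{(1)}_m,u],\dots,[\phi^{(Q)}_m,u])$ for $m\le M_\Omega$ and $B([\phi^{(1)}_m,u],\dots,[\phi^{(Q_b)}_m,u])$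 for $m>M_\Omega$. $\Theta_{i,n}=[\phi_i,\mathcal{K}\phi_n]$ over the entries $\phi_i$ of $\boldsymbol{\phi}$; $\chi_i=\sum_n(\Theta^{-1})_{i,n}\mathcal{K}\phi_n$. (The map $\overline{F}$ arises when the equations $P(v_1,\dots,v_Q)=y$ and $B(v_1,\dots,v_{Q_b})=y$ can be solved explicitly for one selected variable each.) *)

theory Defs
  imports "HOL-Analysis.Analysis"
begin

text \<open>Operators L q (q = 1..Q), collocation points x m (m = 1..M) are 1-indexed.
Finite-dimensional vectors (z in R^N, w in R^(N-M), y in R^M) are real lists (0-indexed).
The vector phi = (phi^(1),...,phi^(Q)) is the concatenation of Q blocks; block q has
M entries if q <= Qb and M_Omega entries otherwise.\<close>

definition blocksize :: "nat \<Rightarrow> nat \<Rightarrow> nat \<Rightarrow> nat \<Rightarrow> nat" where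
  "blocksize Qb M MO q = (if q \<le> Qb then M else MO)"

definition block_offset :: "nat \<Rightarrow> nat \<Rightarrow> nat \<Rightarrow> nat \<Rightarrow> nat" where
  "block_offset Qb M MO q = (\<Sum>q'\<in>{1..<q}. blocksize Qb M MO q')"

definition num_meas :: "nat \<Rightarrow> nat \<Rightarrow> nat \<Rightarrow> nat \<Rightarrow> nat" where
  "num_meas Q Qb M MO = M * Qb + MO * (Q - Qb)"

definition phi_entry :: "(nat \<Rightarrow> 'u::real_normed_vector \<Rightarrow> 'x \<Rightarrow> real) \<Rightarrow> (nat \<Rightarrow> 'x) \<Rightarrow> nat \<Rightarrow> nat \<Rightarrow> ('u \<Rightarrow>\<^sub>L real)" where
  "phi_entry L x q m = Blinfun (\<lambda>u. L q u (x m))"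

definition phi_list :: "(nat \<Rightarrow> 'u::real_normed_vector \<Rightarrow> 'x \<Rightarrow> real) \<Rightarrow> (nat \<Rightarrow> 'x) \<Rightarrow> nat \<Rightarrow> nat \<Rightarrow> nat \<Rightarrow> nat \<Rightarrow> ('u \<Rightarrow>\<^sub>L real) list" where
  "phi_list L x Q Qb M MO =
     concat (map (\<lambda>q. map (\<lambda>m. phi_entry L x q m) [1..<blocksize Qb M MO q + 1]) [1..<Q + 1])"

definition data_vec :: "('x \<Rightarrow> real) \<Rightarrow> ('x \<Rightarrow> real) \<Rightarrow> (nat \<Rightarrow> 'x) \<Rightarrow> nat \<Rightarrow> nat \<Rightarrow> real list" where
  "data_vec f g x M MO = map (\<lambda>m. if m \<le> MO then f (x m) else g (x m)) [1..<M + 1]"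

text \<open>The map F : R^N -> R^M; z is read with the same block structure as phi\<close>
definition Fmap :: "(real list \<Rightarrow> real) \<Rightarrow> (real list \<Rightarrow> real) \<Rightarrow> nat \<Rightarrow> nat \<Rightarrow> nat \<Rightarrow> nat \<Rightarrow> real list \<Rightarrow> real list" where
  "Fmap P B Q Qb M MO z =
     map (\<lambda>m. if m \<le> MO
               then P (map (\<lambda>q. z ! (block_offset Qb M MO q + (m - 1))) [1..<Q + 1])
               else B (map (\<lambda>q. z ! (block_offset Qb M MO q + (m - 1))) [1..<Qb + 1]))
         [1..<M + 1]"

definition Theta :: "(('u::real_normed_vector \<Rightarrow>\<^sub>L real) \<Rightarrow> 'u) \<Rightarrow> ('u \<Rightarrow>\<^sub>L real) list \<Rightarrow> nat \<Rightarrow> nat \<Rightarrow> real" where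
  "Theta K phis i n = blinfun_apply (phis ! i) (K (phis ! n))"

text \<open>Square matrices of size n as functions nat => nat => real with indices < n\<close>
definition is_inverse_mat :: "nat \<Rightarrow> (nat \<Rightarrow> nat \<Rightarrow> real) \<Rightarrow> (nat \<Rightarrow> nat \<Rightarrow> real) \<Rightarrow> bool" where
  "is_inverse_mat n A Ai \<longleftrightarrow>
     (\<forall>i<n. \<forall>j<n. (\<Sum>k<n. A i k * Ai k j) = (if i = j then 1 else 0)) \<and>
     (\<forall>i<n. \<forall>j<n. (\<Sum>k<n. Ai i k * A k j) = (if i = j then 1 else 0))"

definition invertible_sq_mat :: "nat \<Rightarrow> (nat \<Rightarrow> nat \<Rightarrow> real) \<Rightarrow> bool" where
  "invertible_sq_mat n A \<longleftrightarrow> (\<exists>Ai. is_inverse_mat n A Ai)"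

definition inv_sq_mat :: "nat \<Rightarrow> (nat \<Rightarrow> nat \<Rightarrow> real) \<Rightarrow> (nat \<Rightarrow> nat \<Rightarrow> real)" where
  "inv_sq_mat n A = (SOME Ai. is_inverse_mat n A Ai)"

definition chi :: "(('u::real_normed_vector \<Rightarrow>\<^sub>L real) \<Rightarrow> 'u) \<Rightarrow> ('u \<Rightarrow>\<^sub>L real) list \<Rightarrow> nat \<Rightarrow> 'u" where
  "chi K phis i = (let N = length phis; Ti = inv_sq_mat N (Theta K phis) in
                     (\<Sum>n<N. Ti i n *\<^sub>R K (phis ! n)))"

definition quad_form :: "nat \<Rightarrow> (nat \<Rightarrow> nat \<Rightarrow> real) \<Rightarrow> real list \<Rightarrow> real" where
  "quad_form n A z = (\<Sum>i<n. \<Sum>j<n. z ! i * A i j * z ! j)"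

end

theory Submission
  imports Defs
begin


lemma inv_sq_mat_is: "invertible_sq_mat n A \<Longrightarrow> is_inverse_mat n A (inv_sq_mat n A)"
  unfolding invertible_sq_mat_def inv_sq_mat_def by (metis someI_ex)

lemma v_eq:
  assumes lin: "linear K"
  shows "(\<Sum>n<length phis. z!n *\<^sub>R chi K phis n) =
     K (\<Sum>k<length phis. (\<Sum>n<length phis. z!n * inv_sq_mat (length phis) (Theta K phis) n k) *\<^sub>R phis!k)"
proof -
  let ?N = "length phis" let ?T = "inv_sq_mat (length phis) (Theta K phis)"
  have "K (\<Sum>k<?N. (\<Sum>n<?N. z!n * ?T n k) *\<^sub>R phis!k) = (\<Sum>k<?N. (\<Sum>n<?N. z!n * ?T n k) *\<^sub>R K (phis!k))"
    by (simp add: real_vector.linear_sum[OF lin] linear_cmul[OF lin])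
  also have "\<dots> = (\<Sum>k<?N. \<Sum>n<?N. z!n *\<^sub>R ?T n k *\<^sub>R K (phis!k))"
    by (simp add: scaleR_sum_left)
  also have "\<dots> = (\<Sum>n<?N. \<Sum>k<?N. z!n *\<^sub>R ?T n k *\<^sub>R K (phis!k))"
    by (rule sum.swap)
  also have "\<dots> = (\<Sum>n<?N. z!n *\<^sub>R chi K phis n)"
    by (simp add: chi_def Let_def scaleR_sum_right)
  finally show ?thesis by simp
qed

lemma eval_v:
  assumes symm: "\<forall>\<phi> \<psi>. blinfun_apply \<phi> (K \<psi>) = blinfun_apply \<psi> (K \<phi>)"
    and inv: "invertible_sq_mat (length phis) (Theta K phis)" and i: "i < length phis"
  shows "blinfun_apply (phis!i) (K (\<Sum>k<length phis. (\<Sum>n<length phis. z!n * inv_sq_mat (length phis) (Theta K phis) n k) *\<^sub>R phis!k)) = z!i"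
proof -
  let ?N = "length phis" let ?T = "inv_sq_mat (length phis) (Theta K phis)"
  have li: "\<forall>a<?N. \<forall>b<?N. (\<Sum>k<?N. ?T a k * Theta K phis k b) = (if a = b then 1 else 0)"
    using inv_sq_mat_is[OF inv] unfolding is_inverse_mat_def by blast
  have "blinfun_apply (phis!i) (K (\<Sum>k<?N. (\<Sum>n<?N. z!n * ?T n k) *\<^sub>R phis!k))
      = blinfun_apply (\<Sum>k<?N. (\<Sum>n<?N. z!n * ?T n k) *\<^sub>R phis!k) (K (phis!i))"
    using symm by metis
  also have "\<dots> = (\<Sum>k<?N. \<Sum>n<?N. z!n * ?T n k * Theta K phis k i)"
    by (simp add: blinfun.sum_left blinfun.scaleR_left Theta_def sum_distrib_right)
  also have "\<dots> = (\<Sum>n<?N. z!n * (\<Sum>k<?N. ?T n k * Theta K phis k i))"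
    by (subst sum.swap) (simp add: sum_distrib_left mult.assoc)
  also have "\<dots> = (\<Sum>n<?N. z!n * (if n = i then 1 else 0))"
    using li i by (intro sum.cong) auto
  also have "\<dots> = z!i" using i by (simp add: if_distrib cong: if_cong)
  finally show ?thesis .
qed

lemma rep:
  fixes K :: "('u::real_normed_vector \<Rightarrow>\<^sub>L real) \<Rightarrow> 'u"
    and z :: "real list" and u :: 'u
  assumes lin: "linear K" and bij: "bij K"
    and symm: "\<forall>\<phi> \<psi>. blinfun_apply \<phi> (K \<psi>) = blinfun_apply \<psi> (K \<phi>)"
    and normK: "\<forall>u. (norm u)\<^sup>2 = blinfun_apply (inv K u) u"
    and inv: "invertible_sq_mat (length phis) (Theta K phis)"
  defines "v \<equiv> (\<Sum>n<length phis. z!n *\<^sub>R chi K phis n)"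
  shows "\<forall>i<length phis. blinfun_apply (phis!i) v = z!i"
    and "length z = length phis \<Longrightarrow> (norm v)\<^sup>2 = quad_form (length phis) (inv_sq_mat (length phis) (Theta K phis)) z"
    and "\<forall>i<length phis. blinfun_apply (phis!i) u = z!i \<Longrightarrow> (norm u)\<^sup>2 = (norm v)\<^sup>2 + (norm (u - v))\<^sup>2"
proof -
  let ?N = "length phis" let ?T = "inv_sq_mat (length phis) (Theta K phis)"
  define a where "a k = (\<Sum>n<?N. z!n * ?T n k)" for k
  define \<psi> where "\<psi> = (\<Sum>k<?N. a k *\<^sub>R phis!k)"
  have vK: "v = K \<psi>" unfolding v_def \<psi>_def a_def by (rule v_eq[OF lin])
  have inj: "inj K" using bij bij_is_inj by blast
  have iv: "inv K v = \<psi>" using vK inv_f_f[OF inj] by simp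
  show ev: "\<forall>i<?N. blinfun_apply (phis!i) v = z!i"
    using eval_v[OF symm inv] vK unfolding \<psi>_def a_def by blast
  have psi_app: "blinfun_apply \<psi> w = (\<Sum>k<?N. a k * blinfun_apply (phis!k) w)" for w
    unfolding \<psi>_def by (simp add: blinfun.sum_left blinfun.scaleR_left)
  show "(norm v)\<^sup>2 = quad_form ?N ?T z" if "length z = ?N"
  proof -
    have "(norm v)\<^sup>2 = blinfun_apply \<psi> v" using normK iv by metis
    also have "\<dots> = (\<Sum>k<?N. a k * z!k)" using ev psi_app by simp
    also have "\<dots> = quad_form ?N ?T z"
      unfolding quad_form_def a_def
      by (simp add: sum_distrib_left sum_distrib_right, subst sum.swap, simp add: mult_ac)
    finally show ?thesis .
  qed
  show "(norm u)\<^sup>2 = (norm v)\<^sup>2 + (norm (u - v))\<^sup>2" if hu: "\<forall>i<?N. blinfun_apply (phis!i) u = z!i"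
  proof -
    define e where "e = u - v"
    have e0: "blinfun_apply (phis!i) e = 0" if "i < ?N" for i
      using hu ev that unfolding e_def by (simp add: blinfun.diff_right)
    have psie: "blinfun_apply \<psi> e = 0" using psi_app e0 by simp
    have ue: "u = v + e" unfolding e_def by simp
    have Ke: "K (inv K e) = e" using bij by (simp add: bij_is_surj surj_f_inv_f)
    have "K (\<psi> + inv K e) = u" using ue vK Ke real_vector.linear_add[OF lin] by metis
    hence iu: "inv K u = \<psi> + inv K e" using inv_f_f[OF inj] by metis
    have cross: "blinfun_apply (inv K e) v = 0"
      using symm vK Ke psie by metis
    have "(norm u)\<^sup>2 = blinfun_apply (\<psi> + inv K e) (v + e)" using normK iu ue by metis
    also have "\<dots> = blinfun_apply \<psi> v + blinfun_apply (inv K e) e"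
      by (simp add: blinfun.add_left blinfun.add_right psie cross)
    also have "\<dots> = (norm v)\<^sup>2 + (norm e)\<^sup>2" using normK iv by metis
    finally show ?thesis unfolding e_def .
  qed
qed



lemma length_concat_blocks:
  assumes "\<forall>q. length (f q) = bs q"
  shows "length (concat (map f [1..<Q+1])) = (\<Sum>q\<in>{1..Q}. bs q)"
proof (induction Q)
  case 0 then show ?case by simp
next
  case (Suc Q)
  have "[1..<Suc Q + 1] = [1..<Q+1] @ [Q+1]" by simp
  then show ?case using Suc assms by (simp add: sum.atLeast1_atMost_eq)
qed

lemma nth_concat_blocks:
  assumes len: "\<forall>q. length (f q) = bs q"
  shows "q \<in> {1..Q} \<Longrightarrow> j < bs q \<Longrightarrow>
    concat (map f [1..<Q+1]) ! ((\<Sum>q'\<in>{1..<q}. bs q') + j) = f q ! j"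
proof (induction Q)
  case 0 then show ?case by simp
next
  case (Suc Q)
  have sp: "concat (map f [1..<Suc Q + 1]) = concat (map f [1..<Q+1]) @ f (Q+1)" by simp
  have lq: "length (concat (map f [1..<Q+1])) = (\<Sum>q\<in>{1..Q}. bs q)"
    by (rule length_concat_blocks[OF len])
  show ?case
  proof (cases "q \<le> Q")
    case True
    have "{1..Q} = {1..<q} \<union> {q..Q}" using True Suc.prems by auto
    hence "(\<Sum>q\<in>{1..Q}. bs q) = (\<Sum>q'\<in>{1..<q}. bs q') + (\<Sum>q\<in>{q..Q}. bs q)"
      by (simp add: sum.union_disjoint[symmetric] ivl_disj_int)
    moreover have "bs q \<le> (\<Sum>q\<in>{q..Q}. bs q)"
      using True by (intro member_le_sum) auto
    ultimately have lt: "(\<Sum>q'\<in>{1..<q}. bs q') + j < length (concat (map f [1..<Q+1]))"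
      using lq Suc.prems by linarith
    have ih: "concat (map f [1..<Q+1]) ! ((\<Sum>q'\<in>{1..<q}. bs q') + j) = f q ! j"
      using Suc.IH Suc.prems True by auto
    show ?thesis unfolding sp nth_append using lt ih by simp
  next
    case False
    hence qq: "q = Q + 1" using Suc.prems by auto
    have "{1..<q} = {1..Q}" using qq by auto
    hence "(\<Sum>q'\<in>{1..<q}. bs q') + j - length (concat (map f [1..<Q+1])) = j"
      "\<not> (\<Sum>q'\<in>{1..<q}. bs q') + j < length (concat (map f [1..<Q+1]))"
      using lq by auto
    then show ?thesis unfolding sp nth_append using qq by simp
  qed
qed

lemma sum_blocksize: "(\<Sum>q\<in>{1..Q}. blocksize Qb M MO q) = M * min Qb Q + MO * (Q - Qb)"
proof (induction Q)
  case 0 then show ?case by simp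
next
  case (Suc Q)
  have "(\<Sum>q\<in>{1..Suc Q}. blocksize Qb M MO q) = (\<Sum>q\<in>{1..Q}. blocksize Qb M MO q) + blocksize Qb M MO (Suc Q)"
    by simp
  also have "\<dots> = M * min Qb Q + MO * (Q - Qb) + blocksize Qb M MO (Suc Q)" using Suc by simp
  also have "\<dots> = M * min Qb (Suc Q) + MO * (Suc Q - Qb)"
  proof (cases "Suc Q \<le> Qb")
    case True
    then have "min Qb Q = Q" "min Qb (Suc Q) = Suc Q" "Q - Qb = 0" "Suc Q - Qb = 0" by auto
    then show ?thesis using True by (simp add: blocksize_def)
  next
    case False
    then have "min Qb Q = Qb" "min Qb (Suc Q) = Qb" "Suc Q - Qb = Suc (Q - Qb)" by auto
    then show ?thesis using False by (simp add: blocksize_def)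
  qed
  finally show ?case .
qed

lemma length_phi_list: "Qb \<le> Q \<Longrightarrow> length (phi_list L x Q Qb M MO) = num_meas Q Qb M MO"
  unfolding phi_list_def num_meas_def
  using length_concat_blocks[where bs = "blocksize Qb M MO" and f = "\<lambda>q. map (\<lambda>m. phi_entry L x q m) [1..<blocksize Qb M MO q + 1]" and Q = Q]
    sum_blocksize[of Qb M MO Q] by (simp add: min_def)

lemma nth_map_upt1: "1 \<le> m \<Longrightarrow> m \<le> n \<Longrightarrow> map g [1..<n+1] ! (m - 1) = g m"
  by (subst nth_map) (auto simp del: upt_Suc)

lemma nth_phi_list: "q \<in> {1..Q} \<Longrightarrow> m \<in> {1..blocksize Qb M MO q} \<Longrightarrow>
   phi_list L x Q Qb M MO ! (block_offset Qb M MO q + (m - 1)) = phi_entry L x q m"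
  unfolding phi_list_def block_offset_def
  by (subst nth_concat_blocks[where bs = "blocksize Qb M MO"]) (auto simp del: upt_Suc simp: nth_map_upt1)


lemma idx_lt_phi: "Qb \<le> Q \<Longrightarrow> q \<in> {1..Q} \<Longrightarrow> m \<in> {1..blocksize Qb M MO q} \<Longrightarrow>
   block_offset Qb M MO q + (m - 1) < length (phi_list L x Q Qb M MO)"
proof -
  assume a: "Qb \<le> Q" "q \<in> {1..Q}" "m \<in> {1..blocksize Qb M MO q}"
  let ?bs = "blocksize Qb M MO"
  have l: "length (phi_list L x Q Qb M MO) = (\<Sum>q\<in>{1..Q}. ?bs q)"
    unfolding phi_list_def
    by (rule length_concat_blocks) simp
  have "{1..Q} = {1..<q} \<union> {q..Q}" using a by auto
  hence "(\<Sum>q\<in>{1..Q}. ?bs q) = (\<Sum>q'\<in>{1..<q}. ?bs q') + (\<Sum>q\<in>{q..Q}. ?bs q)"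
    by (simp add: sum.union_disjoint[symmetric] ivl_disj_int)
  moreover have "?bs q \<le> (\<Sum>q\<in>{q..Q}. ?bs q)"
    using a by (intro member_le_sum) auto
  ultimately show ?thesis using l a unfolding block_offset_def by auto
qed

theorem corollary3p5:
  fixes K :: "('u::banach \<Rightarrow>\<^sub>L real) \<Rightarrow> 'u"
    and \<Omega> :: "(real ^ 'd) set"
    and L :: "nat \<Rightarrow> 'u \<Rightarrow> real ^ 'd \<Rightarrow> real"
    and P :: "real list \<Rightarrow> real" and B :: "real list \<Rightarrow> real"
    and PDE_P :: "'u \<Rightarrow> real ^ 'd \<Rightarrow> real" and PDE_B :: "'u \<Rightarrow> real ^ 'd \<Rightarrow> real"
    and f g :: "real ^ 'd \<Rightarrow> real"
    and x :: "nat \<Rightarrow> real ^ 'd"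
    and Q Qb M MO :: nat
    and Fbar :: "real list \<Rightarrow> real list \<Rightarrow> real list"
    and u_dag :: 'u
  assumes separable: "separable_space (euclidean :: 'u topology)"
    and K_linear: "linear K" and K_bij: "bij K"
    and K_symm: "\<forall>\<phi> \<psi>. blinfun_apply \<phi> (K \<psi>) = blinfun_apply \<psi> (K \<phi>)"
    and K_pos: "\<forall>\<phi>. \<phi> \<noteq> 0 \<longrightarrow> blinfun_apply \<phi> (K \<phi>) > 0"
    and norm_K: "\<forall>u. (norm u)\<^sup>2 = blinfun_apply (inv K u) u"
    and bounded_\<Omega>: "bounded \<Omega>"
    and Qb: "1 \<le> Qb" "Qb \<le> Q"
    and L_linear: "\<forall>q\<in>{1..Q}. \<forall>z. linear (\<lambda>u. L q u z)"
    and L_cont: "\<forall>q\<in>{1..Q}. \<forall>u. continuous_on \<Omega> (L q u)"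
    and L_bdd: "\<forall>q\<in>{1..Q}. \<exists>C. \<forall>u. \<forall>z\<in>\<Omega>. \<bar>L q u z\<bar> \<le> C * norm u"
    and L_cont_bdry: "\<forall>q\<in>{1..Qb}. \<forall>u. continuous_on (frontier \<Omega>) (L q u)"
    and L_bdd_bdry: "\<forall>q\<in>{1..Qb}. \<exists>C. \<forall>u. \<forall>z\<in>frontier \<Omega>. \<bar>L q u z\<bar> \<le> C * norm u"
    and PDE_P_def: "\<forall>u. \<forall>z\<in>\<Omega>. PDE_P u z = P (map (\<lambda>q. L q u z) [1..<Q + 1])"
    and PDE_B_def: "\<forall>u. \<forall>z\<in>frontier \<Omega>. PDE_B u z = B (map (\<lambda>q. L q u z) [1..<Qb + 1])"
    and MO_le: "MO \<le> M"
    and x_int: "\<forall>m\<in>{1..MO}. x m \<in> \<Omega>"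
    and x_bdry: "\<forall>m\<in>{MO<..M}. x m \<in> frontier \<Omega>"
    and Theta_inv: "invertible_sq_mat (num_meas Q Qb M MO) (Theta K (phi_list L x Q Qb M MO))"
    and Fbar_range: "\<forall>w v. length w = num_meas Q Qb M MO - M \<longrightarrow> length v = M \<longrightarrow>
                        length (Fbar w v) = num_meas Q Qb M MO"
    and Fbar_param: "\<forall>z. length z = num_meas Q Qb M MO \<longrightarrow>
        (Fmap P B Q Qb M MO z = data_vec f g x M MO \<longleftrightarrow>
          (\<exists>w. length w = num_meas Q Qb M MO - M \<and> z = Fbar w (data_vec f g x M MO)))"
    and Fbar_unique: "\<forall>w w'. length w = num_meas Q Qb M MO - M \<longrightarrow> length w' = num_meas Q Qb M MO - M \<longrightarrow>
        Fbar w (data_vec f g x M MO) = Fbar w' (data_vec f g x M MO) \<longrightarrow> w = w'"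
  shows "((\<forall>m\<in>{1..MO}. PDE_P u_dag (x m) = f (x m)) \<and>
          (\<forall>m\<in>{MO<..M}. PDE_B u_dag (x m) = g (x m)) \<and>
          (\<forall>u. (\<forall>m\<in>{1..MO}. PDE_P u (x m) = f (x m)) \<and>
               (\<forall>m\<in>{MO<..M}. PDE_B u (x m) = g (x m)) \<longrightarrow> norm u_dag \<le> norm u))
     \<longleftrightarrow>
         (\<exists>w_dag. length w_dag = num_meas Q Qb M MO - M \<and>
            (\<forall>w. length w = num_meas Q Qb M MO - M \<longrightarrow>
               quad_form (num_meas Q Qb M MO)
                  (inv_sq_mat (num_meas Q Qb M MO) (Theta K (phi_list L x Q Qb M MO)))
                  (Fbar w_dag (data_vec f g x M MO))
               \<le> quad_form (num_meas Q Qb M MO)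
                  (inv_sq_mat (num_meas Q Qb M MO) (Theta K (phi_list L x Q Qb M MO)))
                  (Fbar w (data_vec f g x M MO))) \<and>
            u_dag = (\<Sum>n<num_meas Q Qb M MO.
                       (Fbar w_dag (data_vec f g x M MO) ! n) *\<^sub>R chi K (phi_list L x Q Qb M MO) n))"
  proof -
  let ?N = "num_meas Q Qb M MO"
  let ?phis = "phi_list L x Q Qb M MO"
  let ?y = "data_vec f g x M MO"
  let ?T = "inv_sq_mat ?N (Theta K ?phis)"
  have lenphi: "length ?phis = ?N" using Qb(2) by (rule length_phi_list)
  have invl: "invertible_sq_mat (length ?phis) (Theta K ?phis)" using Theta_inv lenphi by simp
  note R = rep[OF K_linear K_bij K_symm norm_K invl, unfolded lenphi]
  define V where "V z = (\<Sum>n<?N. z!n *\<^sub>R chi K ?phis n)" for z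
  define zu where "zu u = map (\<lambda>\<phi>. blinfun_apply \<phi> u) ?phis" for u
  define feas where "feas u \<longleftrightarrow> (\<forall>m\<in>{1..MO}. PDE_P u (x m) = f (x m)) \<and>
               (\<forall>m\<in>{MO<..M}. PDE_B u (x m) = g (x m))" for u
  have leny: "length ?y = M" by (simp add: data_vec_def)
  have lenzu: "length (zu u) = ?N" for u using lenphi by (simp add: zu_def)
  have bl: "bounded_linear (\<lambda>u. L q u (x m))" if q: "q \<in> {1..Q}" and m: "m \<in> {1..blocksize Qb M MO q}" for q m
  proof -
    have lin: "linear (\<lambda>u. L q u (x m))" using L_linear q by blast
    have "\<exists>C. \<forall>u. \<bar>L q u (x m)\<bar> \<le> C * norm u"
    proof (cases "m \<le> MO")
      case True
      then have "x m \<in> \<Omega>" using x_int m by auto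
      then show ?thesis using L_bdd q by blast
    next
      case False
      then have "q \<le> Qb" using m by (auto simp: blocksize_def split: if_splits)
      moreover have "x m \<in> frontier \<Omega>" using x_bdry m False
        by (auto simp: blocksize_def split: if_splits)
      ultimately show ?thesis using L_bdd_bdry q by fastforce
    qed
    then obtain C where C: "\<forall>u. \<bar>L q u (x m)\<bar> \<le> C * norm u" by blast
    show ?thesis unfolding bounded_linear_def bounded_linear_axioms_def
      using lin C by (auto simp: mult.commute)
  qed
  have zu_nth: "zu u ! (block_offset Qb M MO q + (m - 1)) = L q u (x m)"
    if q: "q \<in> {1..Q}" and m: "m \<in> {1..blocksize Qb M MO q}" for u q m
    using idx_lt_phi[OF Qb(2) q m, where L=L and x=x] nth_phi_list[OF q m, where L=L and x=x] bl[OF q m]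
    by (simp add: zu_def phi_entry_def bounded_linear_Blinfun_apply)
  have pm: "(if m \<le> MO then P (map (\<lambda>q. zu u ! (block_offset Qb M MO q + (m - 1))) [1..<Q + 1])
               else B (map (\<lambda>q. zu u ! (block_offset Qb M MO q + (m - 1))) [1..<Qb + 1]))
          = (if m \<le> MO then f (x m) else g (x m))
        \<longleftrightarrow> (if m \<le> MO then PDE_P u (x m) = f (x m) else PDE_B u (x m) = g (x m))"
    if m: "m \<in> {1..M}" for u m
  proof (cases "m \<le> MO")
    case True
    have e1: "map (\<lambda>q. zu u ! (block_offset Qb M MO q + (m - 1))) [1..<Q + 1] = map (\<lambda>q. L q u (x m)) [1..<Q + 1]"
      using True m MO_le by (intro map_cong refl zu_nth) (auto simp: blocksize_def)
    have e2: "PDE_P u (x m) = P (map (\<lambda>q. L q u (x m)) [1..<Q + 1])"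
      using PDE_P_def x_int True m by auto
    show ?thesis using True by (simp only: e1 e2 if_True)
  next
    case False
    have e1: "map (\<lambda>q. zu u ! (block_offset Qb M MO q + (m - 1))) [1..<Qb + 1] = map (\<lambda>q. L q u (x m)) [1..<Qb + 1]"
      using False m Qb by (intro map_cong refl zu_nth) (auto simp: blocksize_def)
    have e2: "PDE_B u (x m) = B (map (\<lambda>q. L q u (x m)) [1..<Qb + 1])"
      using PDE_B_def x_bdry False m by auto
    show ?thesis using False by (simp only: e1 e2 if_False)
  qed
  have feas_iff: "feas u \<longleftrightarrow> Fmap P B Q Qb M MO (zu u) = ?y" for u
  proof -
    have "Fmap P B Q Qb M MO (zu u) = ?y \<longleftrightarrow>
      (\<forall>m\<in>{1..M}. (if m \<le> MO then PDE_P u (x m) = f (x m) else PDE_B u (x m) = g (x m)))"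
      unfolding Fmap_def data_vec_def map_eq_conv using pm
      by (simp add: atLeastLessThanSuc_atLeastAtMost del: upt_Suc)
    also have "\<dots> \<longleftrightarrow> feas u" unfolding feas_def using MO_le
      by (auto split: if_splits)
    finally show ?thesis by simp
  qed
  have zuV: "zu (V z) = z" if "length z = ?N" for z
    using R(1)[where z=z] that lenzu lenphi unfolding V_def zu_def
    by (intro nth_equalityI) auto
  have normV: "(norm (V z))\<^sup>2 = quad_form ?N ?T z" if "length z = ?N" for z
    using R(2)[where z=z] that unfolding V_def by simp
  have decomp: "(norm u)\<^sup>2 = (norm (V (zu u)))\<^sup>2 + (norm (u - V (zu u)))\<^sup>2" for u
    using R(3)[where z="zu u" and u=u] lenphi unfolding V_def zu_def by simp
  have FbarF: "length (Fbar w ?y) = ?N \<and> Fmap P B Q Qb M MO (Fbar w ?y) = ?y" if "length w = ?N - M" for w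
  proof
    show l: "length (Fbar w ?y) = ?N" using Fbar_range that leny by simp
    show "Fmap P B Q Qb M MO (Fbar w ?y) = ?y" using Fbar_param[rule_format, OF l] that by blast
  qed
  have feasV: "feas (V (Fbar w ?y))" if "length w = ?N - M" for w
  proof -
    have "zu (V (Fbar w ?y)) = Fbar w ?y" by (rule zuV[OF conjunct1[OF FbarF[OF that]]])
    then show ?thesis using feas_iff conjunct2[OF FbarF[OF that]] by simp
  qed
  have feas_param: "\<exists>w. length w = ?N - M \<and> zu u = Fbar w ?y" if "feas u" for u
    using Fbar_param[rule_format, OF lenzu[of u]] feas_iff[of u] that by simp
  have sq_le: "norm a \<le> norm b \<longleftrightarrow> (norm a)\<^sup>2 \<le> (norm b)\<^sup>2" for a b :: 'u
  proof
    assume "norm a \<le> norm b" then show "(norm a)\<^sup>2 \<le> (norm b)\<^sup>2" by (simp add: power_mono)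
  next
    assume "(norm a)\<^sup>2 \<le> (norm b)\<^sup>2" then show "norm a \<le> norm b" by (rule power2_le_imp_le) simp
  qed
  show ?thesis
  proof
    assume H: "(\<forall>m\<in>{1..MO}. PDE_P u_dag (x m) = f (x m)) \<and>
          (\<forall>m\<in>{MO<..M}. PDE_B u_dag (x m) = g (x m)) \<and>
          (\<forall>u. (\<forall>m\<in>{1..MO}. PDE_P u (x m) = f (x m)) \<and>
               (\<forall>m\<in>{MO<..M}. PDE_B u (x m) = g (x m)) \<longrightarrow> norm u_dag \<le> norm u)"
    hence fd: "feas u_dag" and mn: "\<And>u. feas u \<Longrightarrow> norm u_dag \<le> norm u"
      unfolding feas_def by blast+
    obtain wd where wd: "length wd = ?N - M" "zu u_dag = Fbar wd ?y"
      using feas_param[OF fd] by blast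
    have "feas (V (zu u_dag))" using feasV[OF wd(1)] wd(2) by simp
    hence "(norm u_dag)\<^sup>2 \<le> (norm (V (zu u_dag)))\<^sup>2" using mn sq_le by blast
    hence "(norm (u_dag - V (zu u_dag)))\<^sup>2 \<le> 0" using decomp[of u_dag] by linarith
    hence ud: "u_dag = V (zu u_dag)" by simp
    show "\<exists>w_dag. length w_dag = ?N - M \<and>
            (\<forall>w. length w = ?N - M \<longrightarrow> quad_form ?N ?T (Fbar w_dag ?y) \<le> quad_form ?N ?T (Fbar w ?y)) \<and>
            u_dag = (\<Sum>n<?N. (Fbar w_dag ?y ! n) *\<^sub>R chi K ?phis n)"
    proof (intro exI conjI allI impI)
      show "length wd = ?N - M" by (rule wd(1))
      show "u_dag = (\<Sum>n<?N. (Fbar wd ?y ! n) *\<^sub>R chi K ?phis n)"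
        using ud wd(2) unfolding V_def by simp
      fix w :: "real list" assume w: "length w = ?N - M"
      have "(norm u_dag)\<^sup>2 \<le> (norm (V (Fbar w ?y)))\<^sup>2" using mn[OF feasV[OF w]] sq_le by blast
      moreover have "(norm u_dag)\<^sup>2 = quad_form ?N ?T (Fbar wd ?y)"
        using normV[OF conjunct1[OF FbarF[OF wd(1)]]] ud wd(2) by simp
      ultimately show "quad_form ?N ?T (Fbar wd ?y) \<le> quad_form ?N ?T (Fbar w ?y)"
        using normV[OF conjunct1[OF FbarF[OF w]]] by simp
    qed
  next
    assume "\<exists>w_dag. length w_dag = ?N - M \<and>
            (\<forall>w. length w = ?N - M \<longrightarrow> quad_form ?N ?T (Fbar w_dag ?y) \<le> quad_form ?N ?T (Fbar w ?y)) \<and>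
            u_dag = (\<Sum>n<?N. (Fbar w_dag ?y ! n) *\<^sub>R chi K ?phis n)"
    then obtain wd where wd: "length wd = ?N - M"
      "\<And>w. length w = ?N - M \<Longrightarrow> quad_form ?N ?T (Fbar wd ?y) \<le> quad_form ?N ?T (Fbar w ?y)"
      and ud: "u_dag = V (Fbar wd ?y)" unfolding V_def by blast
    have fd: "feas u_dag" using feasV[OF wd(1)] ud by simp
    have nd: "(norm u_dag)\<^sup>2 = quad_form ?N ?T (Fbar wd ?y)" using ud normV FbarF[OF wd(1)] by simp
    have mn: "norm u_dag \<le> norm u" if fu: "feas u" for u
    proof -
      obtain w where w: "length w = ?N - M" "zu u = Fbar w ?y" using feas_param[OF fu] by blast
      have "(norm u)\<^sup>2 \<ge> (norm (V (zu u)))\<^sup>2" using decomp[of u] by simp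
      moreover have "(norm (V (zu u)))\<^sup>2 = quad_form ?N ?T (Fbar w ?y)" using w normV FbarF[OF w(1)] by simp
      ultimately have "(norm u)\<^sup>2 \<ge> (norm u_dag)\<^sup>2" using nd wd(2)[OF w(1)] by linarith
      then show ?thesis using sq_le by blast
    qed
    show "(\<forall>m\<in>{1..MO}. PDE_P u_dag (x m) = f (x m)) \<and>
          (\<forall>m\<in>{MO<..M}. PDE_B u_dag (x m) = g (x m)) \<and>
          (\<forall>u. (\<forall>m\<in>{1..MO}. PDE_P u (x m) = f (x m)) \<and>
               (\<forall>m\<in>{MO<..M}. PDE_B u (x m) = g (x m)) \<longrightarrow> norm u_dag \<le> norm u)"
      using fd mn unfolding feas_def by blast
  qed
qed

end
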